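(* Let $(Z, S(1), S(0), Y(1), Y(0), \mathbf{X})$ be random variables with $Z\in\{0,1\}$, $S(z)\in\{0,1\}$, $Y(z)$ real-valued, $\mathbf{X}$ a covariate vector, observed $S=S(Z)$, and assume Randomization: $Z \perp\!\!\!\perp \{S(1),S(0),Y(1),Y(0),\mathbf{X}\}$ and Monotonicity ($S(1)\ge S(0)$ a.s.). Suppose there are constants $\varepsilon_1,\varepsilon_0$ (not depending on $\mathbf{X}$) with $\varepsilon_1 = E\{Y(1)\mid U=s\bar{s},\mathbf{X}\}/E\{Y(1)\mid U=ss,\mathbf{X}\}$ and $\varepsilon_0 = E\{Y(0)\mid U=s\bar{s},\mathbf{X}\}/E\{Y(0)\mid U=\bar{s}\bar{s},\mathbf{X}\}$. Then $$\varepsilon_1 = \frac{E\{Y(1)\mid U=s\bar{s}, e_{1,u}(\mathbf{X})\}}{E\{Y(1)\mid U=ss, e_{1,u}(\mathbf{X})\}}\quad (u=s\bar{s},ss),\qquad \varepsilon_0 = \frac{E\{Y(0)\mid U=s\bar{s}, e_{0,u}(\mathbf{X})\}}{E\{Y(0)\mid U=\bar{s}\bar{s}, e_{0,u}(\mathbf{X})\}}\quad (u=s\bar{s},\bar{s}\bar{s}).$$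
   Context: The principal stratum is $U=(S(1),S(0))$, whose values $(1,1),(1,0),(0,1),(0,0)$ are labelled $ss, s\bar{s}, \bar{s}s, \bar{s}\bar{s}$. Principal scores: $e_u(\mathbf{X}) = \Pr(U=u\mid \mathbf{X})$. Define $e_{1,s\bar{s}}(\mathbf{X}) = e_{s\bar{s}}(\mathbf{X})/\{e_{s\bar{s}}(\mathbf{X})+e_{ss}(\mathbf{X})\}$, $e_{1,ss}(\mathbf{X}) = e_{ss}(\mathbf{X})/\{e_{s\bar{s}}(\mathbf{X})+e_{ss}(\mathbf{X})\}$, $e_{0,s\bar{s}}(\mathbf{X}) = e_{s\bar{s}}(\mathbf{X})/\{e_{s\bar{s}}(\mathbf{X})+e_{\bar{s}\bar{s}}(\mathbf{X})\}$, $e_{0,\bar{s}\bar{s}}(\mathbf{X}) = e_{\bar{s}\bar{s}}(\mathbf{X})/\{e_{s\bar{s}}(\mathbf{X})+e_{\bar{s}\bar{s}}(\mathbf{X})\}$. Expectations are assumed to exist and conditioning events and denominators to be positive/nonzero. *)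

theory Defs
  imports "HOL-Probability.Probability"
begin

text \<open>Principal strata: U = (S(1), S(0)) :: bool \<times> bool.
  ss = (True,True), s-sbar = (True,False), sbar-s = (False,True), sbar-sbar = (False,False).\<close>

definition stratum :: "('a \<Rightarrow> bool) \<Rightarrow> ('a \<Rightarrow> bool) \<Rightarrow> 'a \<Rightarrow> bool \<times> bool" where
  "stratum S1 S0 = (\<lambda>\<omega>. (S1 \<omega>, S0 \<omega>))"

definition gen_sa :: "'a measure \<Rightarrow> ('a \<Rightarrow> 'b) \<Rightarrow> 'b measure \<Rightarrow> 'a measure" where
  "gen_sa M W N = vimage_algebra (space M) W N"

text \<open>E{Y | A, F} := E[Y 1_A | F] / P(A | F) (a version, as a function on the sample space).\<close>
definition cond_exp_given :: "'a measure \<Rightarrow> 'a measure \<Rightarrow> 'a set \<Rightarrow> ('a \<Rightarrow> real) \<Rightarrow> 'a \<Rightarrow> real" where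
  "cond_exp_given M F A Y = (\<lambda>\<omega>. real_cond_exp M F (\<lambda>x. indicator A x * Y x) \<omega>
                                   / real_cond_exp M F (indicator A) \<omega>)"

definition strat_event :: "'a measure \<Rightarrow> ('a \<Rightarrow> bool \<times> bool) \<Rightarrow> bool \<times> bool \<Rightarrow> 'a set" where
  "strat_event M U u = {\<omega> \<in> space M. U \<omega> = u}"

definition pscore :: "'a measure \<Rightarrow> ('a \<Rightarrow> 'd::topological_space) \<Rightarrow> ('a \<Rightarrow> bool \<times> bool) \<Rightarrow> bool \<times> bool \<Rightarrow> 'a \<Rightarrow> real" where
  "pscore M X U u = real_cond_exp M (gen_sa M X borel) (indicator (strat_event M U u))"

abbreviation "ss \<equiv> (True, True)"
abbreviation "ssbar \<equiv> (True, False)"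
abbreviation "sbarsbar \<equiv> (False, False)"

definition pscore1 :: "'a measure \<Rightarrow> ('a \<Rightarrow> 'd::topological_space) \<Rightarrow> ('a \<Rightarrow> bool \<times> bool) \<Rightarrow> bool \<times> bool \<Rightarrow> 'a \<Rightarrow> real" where
  "pscore1 M X U u = (\<lambda>\<omega>. pscore M X U u \<omega> / (pscore M X U ssbar \<omega> + pscore M X U ss \<omega>))"

definition pscore0 :: "'a measure \<Rightarrow> ('a \<Rightarrow> 'd::topological_space) \<Rightarrow> ('a \<Rightarrow> bool \<times> bool) \<Rightarrow> bool \<times> bool \<Rightarrow> 'a \<Rightarrow> real" where
  "pscore0 M X U u = (\<lambda>\<omega>. pscore M X U u \<omega> / (pscore M X U ssbar \<omega> + pscore M X U sbarsbar \<omega>))"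

end

theory Submission
  imports Defs
begin

lemma subalg_gen:
  assumes "W \<in> borel_measurable M"
  shows "subalgebra M (gen_sa M W borel)"
  unfolding subalgebra_def gen_sa_def
proof
  show "space (vimage_algebra (space M) W borel) = space M" by simp
  have "W \<in> space M \<rightarrow> space borel" by simp
  then show "sets (vimage_algebra (space M) W borel) \<subseteq> sets M"
    using assms by (auto simp: sets_vimage_algebra2 measurable_sets)
qed

lemma sfs_gen:
  assumes "prob_space M" "W \<in> borel_measurable M"
  shows "sigma_finite_subalgebra M (gen_sa M W borel)"
  apply (rule finite_measure_subalgebra_is_sigma_finite)
  unfolding finite_measure_subalgebra_def finite_measure_subalgebra_axioms_def
  using assms subalg_gen prob_space.axioms(1) by blast

lemma subalg_nested:
  fixes W :: "'a \<Rightarrow> 'b::topological_space" and G M :: "'a measure"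
  assumes "W \<in> borel_measurable G" "space G = space M"
  shows "subalgebra G (gen_sa M W borel)"
  unfolding subalgebra_def gen_sa_def
proof
  show "space (vimage_algebra (space M) W borel) = space G" using assms by simp
  have "W \<in> space M \<rightarrow> space borel" by simp
  then show "sets (vimage_algebra (space M) W borel) \<subseteq> sets G"
  proof (subst sets_vimage_algebra2[OF \<open>W \<in> space M \<rightarrow> space borel\<close>], safe)
    fix A :: "'b set" assume "A \<in> sets borel"
    then have "W -` A \<inter> space G \<in> sets G" using assms(1) measurable_sets by blast
    then show "W -` A \<inter> space M \<in> sets G" using assms(2) by simp
  qed
qed

lemma sfs_of:
  assumes "prob_space M" "subalgebra M G"
  shows "sigma_finite_subalgebra M G"
  apply (rule finite_measure_subalgebra_is_sigma_finite)
  unfolding finite_measure_subalgebra_def finite_measure_subalgebra_axioms_def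
  using assms prob_space.axioms(1) by blast

lemma transfer:
  assumes P: "prob_space M" and G: "subalgebra M G" and H: "subalgebra G H"
    and f: "f \<in> borel_measurable H" and V: "integrable M V" and W: "integrable M W"
    and eq: "AE x in M. real_cond_exp M G V x = f x * real_cond_exp M G W x"
  shows "AE x in M. real_cond_exp M H V x = f x * real_cond_exp M H W x"
proof -
  have HM: "subalgebra M H" using G H unfolding subalgebra_def by auto
  interpret Hs: sigma_finite_subalgebra M H using sfs_of[OF P HM] .
  interpret Gs: sigma_finite_subalgebra M G using sfs_of[OF P G] .
  have fM: "f \<in> borel_measurable M" using f HM measurable_from_subalg by blast
  have i1: "integrable M (real_cond_exp M G V)" by (rule Gs.real_cond_exp_int(1)[OF V])
  have iW: "integrable M (real_cond_exp M G W)" by (rule Gs.real_cond_exp_int(1)[OF W])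
  have m2: "(\<lambda>x. f x * real_cond_exp M G W x) \<in> borel_measurable M"
    using fM iW by measurable
  have i2: "integrable M (\<lambda>x. f x * real_cond_exp M G W x)"
    using integrable_cong_AE[OF borel_measurable_integrable[OF i1] m2 eq] i1 by simp
  have a1: "AE x in M. real_cond_exp M H (real_cond_exp M G V) x = real_cond_exp M H V x"
    by (rule Hs.real_cond_exp_nested_subalg[OF G H V])
  have a2: "AE x in M. real_cond_exp M H (real_cond_exp M G V) x = real_cond_exp M H (\<lambda>x. f x * real_cond_exp M G W x) x"
    by (rule Hs.real_cond_exp_cong[OF eq borel_measurable_integrable[OF i1] m2])
  have a3: "AE x in M. real_cond_exp M H (\<lambda>x. f x * real_cond_exp M G W x) x = f x * real_cond_exp M H (real_cond_exp M G W) x"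
    by (rule Hs.real_cond_exp_mult[OF f borel_measurable_integrable[OF iW] i2])
  have a4: "AE x in M. real_cond_exp M H (real_cond_exp M G W) x = real_cond_exp M H W x"
    by (rule Hs.real_cond_exp_nested_subalg[OF G H W])
  show ?thesis using a1 a2 a3 a4 by eventually_elim simp
qed

lemma h1: "0<a \<Longrightarrow> 0<b \<Longrightarrow> a/b = (a/(a+b::real))/(1 - a/(a+b))"
proof -
  assume "0<a" "0<b"
  then have "1 - a/(a+b) = b/(a+b)" by (simp add: field_simps)
  then show ?thesis using \<open>0<a\<close> \<open>0<b\<close> by simp
qed
lemma h2: "0<a \<Longrightarrow> 0<b \<Longrightarrow> a/b = (1 - b/(a+b::real))/(b/(a+b))"
proof -
  assume "0<a" "0<b"
  then have "1 - b/(a+b) = a/(a+b)" by (simp add: field_simps)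
  then show ?thesis using \<open>0<a\<close> \<open>0<b\<close> by simp
qed

lemma gen:
  fixes X :: "'a \<Rightarrow> 'd::topological_space" and Y :: "'a \<Rightarrow> real" and e :: "'a \<Rightarrow> real"
  assumes P: "prob_space M" and Xm: "X \<in> borel_measurable M" and E1: "E1 \<in> sets M" and E2: "E2 \<in> sets M"
    and Y: "integrable M Y"
    and apos: "AE \<omega> in M. real_cond_exp M (gen_sa M X borel) (indicator E1) \<omega> > 0"
    and bpos: "AE \<omega> in M. real_cond_exp M (gen_sa M X borel) (indicator E2) \<omega> > 0"
    and nzX: "AE \<omega> in M. cond_exp_given M (gen_sa M X borel) E2 Y \<omega> \<noteq> 0"
    and eps: "AE \<omega> in M. \<epsilon> = cond_exp_given M (gen_sa M X borel) E1 Y \<omega> / cond_exp_given M (gen_sa M X borel) E2 Y \<omega>"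
    and e: "e = (\<lambda>\<omega>. real_cond_exp M (gen_sa M X borel) (indicator E1) \<omega> /
               (real_cond_exp M (gen_sa M X borel) (indicator E1) \<omega> + real_cond_exp M (gen_sa M X borel) (indicator E2) \<omega>))
         \<or> e = (\<lambda>\<omega>. real_cond_exp M (gen_sa M X borel) (indicator E2) \<omega> /
               (real_cond_exp M (gen_sa M X borel) (indicator E1) \<omega> + real_cond_exp M (gen_sa M X borel) (indicator E2) \<omega>))"
    and nze: "AE \<omega> in M. cond_exp_given M (gen_sa M e borel) E2 Y \<omega> \<noteq> 0"
  shows "AE \<omega> in M. \<epsilon> = cond_exp_given M (gen_sa M e borel) E1 Y \<omega> / cond_exp_given M (gen_sa M e borel) E2 Y \<omega>"
proof -
  define G where "G = gen_sa M X borel"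
  define H where "H = gen_sa M e borel"
  define a where "a = real_cond_exp M G (indicator E1)"
  define b where "b = real_cond_exp M G (indicator E2)"
  have GM: "subalgebra M G" unfolding G_def by (rule subalg_gen[OF Xm])
  have spG: "space G = space M" unfolding G_def gen_sa_def by simp
  have am: "a \<in> borel_measurable G" unfolding a_def by (rule borel_measurable_cond_exp)
  have bm: "b \<in> borel_measurable G" unfolding b_def by (rule borel_measurable_cond_exp)
  have eab: "e = (\<lambda>\<omega>. a \<omega> / (a \<omega> + b \<omega>)) \<or> e = (\<lambda>\<omega>. b \<omega> / (a \<omega> + b \<omega>))"
    using e unfolding a_def b_def G_def .
  have em: "e \<in> borel_measurable G"
    using eab borel_measurable_divide[OF am borel_measurable_add[OF am bm]]
      borel_measurable_divide[OF bm borel_measurable_add[OF am bm]] by blast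
  have GH: "subalgebra G H" unfolding H_def by (rule subalg_nested[OF em spG])
  have eH: "e \<in> borel_measurable H" unfolding H_def gen_sa_def by (rule measurable_vimage_algebra1) simp
  have ab: "AE \<omega> in M. a \<omega> > 0 \<and> b \<omega> > 0" using apos bpos unfolding a_def b_def G_def by eventually_elim simp
  obtain \<phi> :: "real \<Rightarrow> real" where phim: "\<phi> \<in> borel_measurable borel"
      and phi: "AE \<omega> in M. a \<omega> / b \<omega> = \<phi> (e \<omega>)"
  proof (cases "e = (\<lambda>\<omega>. a \<omega> / (a \<omega> + b \<omega>))")
    case True
    show ?thesis
    proof (rule that[of "\<lambda>t. t / (1 - t)"])
      show "(\<lambda>t::real. t / (1 - t)) \<in> borel_measurable borel" by measurable
      show "AE \<omega> in M. a \<omega> / b \<omega> = e \<omega> / (1 - e \<omega>)"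
        using ab unfolding True by eventually_elim (rule h1, simp_all)
    qed
  next
    case False
    then have F: "e = (\<lambda>\<omega>. b \<omega> / (a \<omega> + b \<omega>))" using eab by blast
    show ?thesis
    proof (rule that[of "\<lambda>t. (1 - t) / t"])
      show "(\<lambda>t::real. (1 - t) / t) \<in> borel_measurable borel" by measurable
      show "AE \<omega> in M. a \<omega> / b \<omega> = (1 - e \<omega>) / e \<omega>"
        using ab unfolding F by eventually_elim (rule h2, simp_all)
    qed
  qed
  have phiH: "(\<lambda>\<omega>. \<phi> (e \<omega>)) \<in> borel_measurable H" using measurable_compose[OF eH phim] by (simp add: o_def)
  have fin: "\<And>A. A \<in> sets M \<Longrightarrow> emeasure M A < \<infinity>"
    using finite_measure.emeasure_finite[OF prob_space.axioms(1)[OF P]] by (simp add: less_top[symmetric])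
  have I1: "integrable M (indicator E1 :: 'a \<Rightarrow> real)" by (rule integrable_real_indicator[OF E1 fin[OF E1]])
  have I2: "integrable M (indicator E2 :: 'a \<Rightarrow> real)" by (rule integrable_real_indicator[OF E2 fin[OF E2]])
  have IY1: "integrable M (\<lambda>x. indicator E1 x * Y x)" using integrable_mult_indicator[OF E1 Y] by simp
  have IY2: "integrable M (\<lambda>x. indicator E2 x * Y x)" using integrable_mult_indicator[OF E2 Y] by simp
  define A where "A = real_cond_exp M G (\<lambda>x. indicator E1 x * Y x)"
  define B where "B = real_cond_exp M G (\<lambda>x. indicator E2 x * Y x)"
  have cgX: "\<And>E F. cond_exp_given M (gen_sa M X borel) E F = (\<lambda>x. real_cond_exp M G (\<lambda>x. indicator E x * F x) x / real_cond_exp M G (indicator E) x)"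
    unfolding cond_exp_given_def G_def ..
  have eps': "AE x in M. \<epsilon> = (A x / a x) / (B x / b x)"
    using eps unfolding cgX A_def B_def a_def b_def by simp
  have nzX': "AE x in M. B x / b x \<noteq> 0"
    using nzX unfolding cgX B_def b_def by simp
  have eq1: "AE x in M. real_cond_exp M G (\<lambda>x. indicator E1 x * Y x) x = (\<epsilon> * \<phi> (e x)) * real_cond_exp M G (\<lambda>x. indicator E2 x * Y x) x"
    using ab phi eps' nzX' unfolding A_def[symmetric] B_def[symmetric]
  proof eventually_elim
    case (elim x)
    then have "\<epsilon> * (B x / b x) = A x / a x" by simp
    then show ?case using elim(1) unfolding elim(2)[symmetric] by (simp add: field_simps)
  qed
  have eq2: "AE x in M. real_cond_exp M G (indicator E1) x = \<phi> (e x) * real_cond_exp M G (indicator E2) x"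
    using ab phi unfolding a_def[symmetric] b_def[symmetric]
  proof eventually_elim
    case (elim x)
    then show ?case unfolding elim(2)[symmetric] by simp
  qed
  have fH: "(\<lambda>x. \<epsilon> * \<phi> (e x)) \<in> borel_measurable H" using phiH by measurable
  note t1 = transfer[OF P GM GH fH IY1 IY2 eq1]
  note t2 = transfer[OF P GM GH phiH I1 I2 eq2]
  have phipos: "AE x in M. \<phi> (e x) \<noteq> 0" using ab phi by eventually_elim (metis less_irrefl divide_pos_pos)
  have cgH: "\<And>E F. cond_exp_given M (gen_sa M e borel) E F = (\<lambda>x. real_cond_exp M H (\<lambda>x. indicator E x * F x) x / real_cond_exp M H (indicator E) x)"
    unfolding cond_exp_given_def H_def ..
  show ?thesis using t1 t2 phipos nze unfolding cgH
  proof eventually_elim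
    case (elim x)
    let ?C1 = "real_cond_exp M H (\<lambda>x. indicator E1 x * Y x) x"
    let ?C2 = "real_cond_exp M H (\<lambda>x. indicator E2 x * Y x) x"
    let ?c1 = "real_cond_exp M H (indicator E1) x"
    let ?c2 = "real_cond_exp M H (indicator E2) x"
    have "?C1 / ?c1 = \<epsilon> * (?C2 / ?c2)" unfolding elim(1) elim(2) using elim(3) by simp
    then show ?case using elim(4) by simp
  qed
qed
lemma strat_sets:
  assumes "S1 \<in> M \<rightarrow>\<^sub>M count_space UNIV" "S0 \<in> M \<rightarrow>\<^sub>M count_space UNIV"
  shows "strat_event M (stratum S1 S0) u \<in> sets M"
proof -
  have "strat_event M (stratum S1 S0) u = (S1 -` {fst u} \<inter> space M) \<inter> (S0 -` {snd u} \<inter> space M)"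
    unfolding strat_event_def stratum_def by (cases u) auto
  moreover have "S1 -` {fst u} \<inter> space M \<in> sets M" using measurable_sets[OF assms(1)] by simp
  moreover have "S0 -` {snd u} \<inter> space M \<in> sets M" using measurable_sets[OF assms(2)] by simp
  ultimately show ?thesis by simp
qed

theorem lemmaA9:
  fixes M :: "'a measure"
    and Z S1 S0 :: "'a \<Rightarrow> bool"
    and Y1 Y0 :: "'a \<Rightarrow> real"
    and X :: "'a \<Rightarrow> 'd::euclidean_space"
    and \<epsilon>1 \<epsilon>0 :: real
  defines "U \<equiv> stratum S1 S0"
  assumes P: "prob_space M"
    and rvZ: "Z \<in> M \<rightarrow>\<^sub>M count_space UNIV"
    and rvS1: "S1 \<in> M \<rightarrow>\<^sub>M count_space UNIV"
    and rvS0: "S0 \<in> M \<rightarrow>\<^sub>M count_space UNIV"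
    and rvX: "X \<in> M \<rightarrow>\<^sub>M borel"
    and intY1: "integrable M Y1"
    and intY0: "integrable M Y0"
    and randomization: "prob_space.indep_set M (sets (gen_sa M Z (count_space UNIV)))
          (sets (gen_sa M (\<lambda>\<omega>. (S1 \<omega>, S0 \<omega>, Y1 \<omega>, Y0 \<omega>, X \<omega>))
             (count_space UNIV \<Otimes>\<^sub>M (count_space UNIV \<Otimes>\<^sub>M (borel \<Otimes>\<^sub>M (borel \<Otimes>\<^sub>M borel))))))"
    and monotonicity: "AE \<omega> in M. S0 \<omega> \<longrightarrow> S1 \<omega>"
    and pos_ss: "AE \<omega> in M. pscore M X U ss \<omega> > 0"
    and pos_ssbar: "AE \<omega> in M. pscore M X U ssbar \<omega> > 0"
    and pos_sbarsbar: "AE \<omega> in M. pscore M X U sbarsbar \<omega> > 0"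
    and nz1X: "AE \<omega> in M. cond_exp_given M (gen_sa M X borel) (strat_event M U ss) Y1 \<omega> \<noteq> 0"
    and nz0X: "AE \<omega> in M. cond_exp_given M (gen_sa M X borel) (strat_event M U sbarsbar) Y0 \<omega> \<noteq> 0"
    and nz1e: "\<And>u. u \<in> {ssbar, ss} \<Longrightarrow> AE \<omega> in M.
          cond_exp_given M (gen_sa M (pscore1 M X U u) borel) (strat_event M U ss) Y1 \<omega> \<noteq> 0"
    and nz0e: "\<And>u. u \<in> {ssbar, sbarsbar} \<Longrightarrow> AE \<omega> in M.
          cond_exp_given M (gen_sa M (pscore0 M X U u) borel) (strat_event M U sbarsbar) Y0 \<omega> \<noteq> 0"
    and eps1: "AE \<omega> in M. \<epsilon>1 =
          cond_exp_given M (gen_sa M X borel) (strat_event M U ssbar) Y1 \<omega>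
        / cond_exp_given M (gen_sa M X borel) (strat_event M U ss) Y1 \<omega>"
    and eps0: "AE \<omega> in M. \<epsilon>0 =
          cond_exp_given M (gen_sa M X borel) (strat_event M U ssbar) Y0 \<omega>
        / cond_exp_given M (gen_sa M X borel) (strat_event M U sbarsbar) Y0 \<omega>"
  shows "(\<forall>u \<in> {ssbar, ss}. AE \<omega> in M. \<epsilon>1 =
            cond_exp_given M (gen_sa M (pscore1 M X U u) borel) (strat_event M U ssbar) Y1 \<omega>
          / cond_exp_given M (gen_sa M (pscore1 M X U u) borel) (strat_event M U ss) Y1 \<omega>)
       \<and> (\<forall>u \<in> {ssbar, sbarsbar}. AE \<omega> in M. \<epsilon>0 =
            cond_exp_given M (gen_sa M (pscore0 M X U u) borel) (strat_event M U ssbar) Y0 \<omega>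
          / cond_exp_given M (gen_sa M (pscore0 M X U u) borel) (strat_event M U sbarsbar) Y0 \<omega>)"
proof -
  have Ess: "strat_event M U ss \<in> sets M" "strat_event M U ssbar \<in> sets M" "strat_event M U sbarsbar \<in> sets M"
    unfolding U_def using strat_sets[OF rvS1 rvS0] by auto
  have part1: "\<forall>u \<in> {ssbar, ss}. AE \<omega> in M. \<epsilon>1 =
            cond_exp_given M (gen_sa M (pscore1 M X U u) borel) (strat_event M U ssbar) Y1 \<omega>
          / cond_exp_given M (gen_sa M (pscore1 M X U u) borel) (strat_event M U ss) Y1 \<omega>"
  proof
    fix u assume u: "u \<in> {ssbar, ss}"
    show "AE \<omega> in M. \<epsilon>1 =
            cond_exp_given M (gen_sa M (pscore1 M X U u) borel) (strat_event M U ssbar) Y1 \<omega>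
          / cond_exp_given M (gen_sa M (pscore1 M X U u) borel) (strat_event M U ss) Y1 \<omega>"
    proof (rule gen[OF P rvX Ess(2) Ess(1) intY1 _ _ nz1X eps1 _ nz1e[OF u]])
      show "AE \<omega> in M. 0 < real_cond_exp M (gen_sa M X borel) (indicator (strat_event M U ssbar)) \<omega>"
        using pos_ssbar unfolding pscore_def .
      show "AE \<omega> in M. 0 < real_cond_exp M (gen_sa M X borel) (indicator (strat_event M U ss)) \<omega>"
        using pos_ss unfolding pscore_def .
      show "pscore1 M X U u = (\<lambda>\<omega>. real_cond_exp M (gen_sa M X borel) (indicator (strat_event M U ssbar)) \<omega> /
               (real_cond_exp M (gen_sa M X borel) (indicator (strat_event M U ssbar)) \<omega> + real_cond_exp M (gen_sa M X borel) (indicator (strat_event M U ss)) \<omega>))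
         \<or> pscore1 M X U u = (\<lambda>\<omega>. real_cond_exp M (gen_sa M X borel) (indicator (strat_event M U ss)) \<omega> /
               (real_cond_exp M (gen_sa M X borel) (indicator (strat_event M U ssbar)) \<omega> + real_cond_exp M (gen_sa M X borel) (indicator (strat_event M U ss)) \<omega>))"
        using u unfolding pscore1_def pscore_def by auto
    qed
  qed
  have part0: "\<forall>u \<in> {ssbar, sbarsbar}. AE \<omega> in M. \<epsilon>0 =
            cond_exp_given M (gen_sa M (pscore0 M X U u) borel) (strat_event M U ssbar) Y0 \<omega>
          / cond_exp_given M (gen_sa M (pscore0 M X U u) borel) (strat_event M U sbarsbar) Y0 \<omega>"
  proof
    fix u assume u: "u \<in> {ssbar, sbarsbar}"
    show "AE \<omega> in M. \<epsilon>0 =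
            cond_exp_given M (gen_sa M (pscore0 M X U u) borel) (strat_event M U ssbar) Y0 \<omega>
          / cond_exp_given M (gen_sa M (pscore0 M X U u) borel) (strat_event M U sbarsbar) Y0 \<omega>"
    proof (rule gen[OF P rvX Ess(2) Ess(3) intY0 _ _ nz0X eps0 _ nz0e[OF u]])
      show "AE \<omega> in M. 0 < real_cond_exp M (gen_sa M X borel) (indicator (strat_event M U ssbar)) \<omega>"
        using pos_ssbar unfolding pscore_def .
      show "AE \<omega> in M. 0 < real_cond_exp M (gen_sa M X borel) (indicator (strat_event M U sbarsbar)) \<omega>"
        using pos_sbarsbar unfolding pscore_def .
      show "pscore0 M X U u = (\<lambda>\<omega>. real_cond_exp M (gen_sa M X borel) (indicator (strat_event M U ssbar)) \<omega> /
               (real_cond_exp M (gen_sa M X borel) (indicator (strat_event M U ssbar)) \<omega> + real_cond_exp M (gen_sa M X borel) (indicator (strat_event M U sbarsbar)) \<omega>))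
         \<or> pscore0 M X U u = (\<lambda>\<omega>. real_cond_exp M (gen_sa M X borel) (indicator (strat_event M U sbarsbar)) \<omega> /
               (real_cond_exp M (gen_sa M X borel) (indicator (strat_event M U ssbar)) \<omega> + real_cond_exp M (gen_sa M X borel) (indicator (strat_event M U sbarsbar)) \<omega>))"
        using u unfolding pscore0_def pscore_def by auto
    qed
  qed
  show ?thesis using part1 part0 by blast
qed

end
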